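(* Let $\mathbb{T}^2=\mathbb{R}^2/\mathbb{Z}^2$ with coordinates $(x,y)$, let $a>0$, and equip $\mathrm{Diff}(\mathbb{T}^2)$ with the right-invariant metric given at the identity by $\langle\!\langle u,v\rangle\!\rangle=a\int_{\mathbb{T}^2}\langle u,v\rangle\,dx\,dy$. Write $S(u,v)=\langle\!\langle R(u,v)v,u\rangle\!\rangle$. Then for any $u=f(x)\frac{\partial}{\partial x}$ and $v=g(x)\frac{\partial}{\partial x}$ with $f,g$ smooth and $1$-periodic, $$S(u,v)=a\int_{\mathbb{T}^2}(f g_x-g f_x)^2\,dx\,dy\ \ge 0 .$$ On the other hand, if $u=\sin(2\pi x)\frac{\partial}{\partial x}$ and $v=\sin^2(2\pi x)\frac{\partial}{\partial y}$, then $S(u,v)<0$.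
   Context: $R$ is the curvature tensor of the Levi-Civita connection of the right-invariant metric at the identity. *)

theory Defs
  imports "HOL-Analysis.Analysis"
begin

fun iter_dderiv :: "'a::real_normed_vector list \<Rightarrow> ('a \<Rightarrow> 'b::real_normed_vector) \<Rightarrow> 'a \<Rightarrow> 'b" where
  "iter_dderiv [] f = f"
| "iter_dderiv (h # hs) f = (\<lambda>x. frechet_derivative (iter_dderiv hs f) (at x) h)"

definition smooth :: "('a::real_normed_vector \<Rightarrow> 'b::real_normed_vector) \<Rightarrow> bool" where
  "smooth f \<longleftrightarrow> (\<forall>hs x. iter_dderiv hs f differentiable (at x))"

type_synonym vfield = "real \<times> real \<Rightarrow> real \<times> real"

(* smooth vector fields on the torus T^2 = R^2/Z^2, as Z^2-periodic smooth maps R^2 \<rightarrow> R^2 *)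
definition VF :: "vfield set" where
  "VF = {u. smooth u \<and> (\<forall>x y. u (x + 1, y) = u (x, y) \<and> u (x, y + 1) = u (x, y))}"

definition vbracket :: "vfield \<Rightarrow> vfield \<Rightarrow> vfield" where
  "vbracket u v = (\<lambda>p. frechet_derivative v (at p) (u p) - frechet_derivative u (at p) (v p))"

definition L2ip :: "real \<Rightarrow> vfield \<Rightarrow> vfield \<Rightarrow> real" where
  "L2ip a u v = a * integral (cbox (0,0) (1,1)) (\<lambda>p. inner (u p) (v p))"

definition adstar :: "real \<Rightarrow> vfield \<Rightarrow> vfield \<Rightarrow> vfield" where
  "adstar a u v = (THE w. w \<in> VF \<and> (\<forall>z\<in>VF. L2ip a w z = L2ip a v (vbracket u z)))"

definition LCconn :: "real \<Rightarrow> vfield \<Rightarrow> vfield \<Rightarrow> vfield" where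
  "LCconn a u v = (\<lambda>p. (1/2) *\<^sub>R (vbracket u v p - adstar a u v p - adstar a v u p))"

definition curv :: "real \<Rightarrow> vfield \<Rightarrow> vfield \<Rightarrow> vfield \<Rightarrow> vfield" where
  "curv a u v w = (\<lambda>p. LCconn a u (LCconn a v w) p - LCconn a v (LCconn a u w) p - LCconn a (vbracket u v) w p)"

definition sec_S :: "real \<Rightarrow> vfield \<Rightarrow> vfield \<Rightarrow> real" where
  "sec_S a u v = L2ip a (curv a u v v) u"

end

theory Submission
  imports Defs
begin


lemma rdiff_iff: "(f::real\<Rightarrow>real) differentiable at x \<longleftrightarrow> f field_differentiable at x"
  by (metis DERIV_deriv_iff_real_differentiable DERIV_deriv_iff_field_differentiable)

definition sm1 :: "(real \<Rightarrow> real) \<Rightarrow> bool" where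
  "sm1 f \<longleftrightarrow> (\<forall>n x. (deriv ^^ n) f differentiable (at x))"

lemma sm1_coinduct:
  assumes "S f" "\<And>g. S g \<Longrightarrow> (\<forall>x. g differentiable (at x)) \<and> S (deriv g)"
  shows "sm1 f"
proof -
  have "S ((deriv^^n) f)" for n by (induct n) (auto dest: assms(2) simp: assms(1))
  then show ?thesis unfolding sm1_def using assms(2) by blast
qed

lemma sm1_diff: "sm1 f \<Longrightarrow> f differentiable (at x)"
  unfolding sm1_def by (metis funpow_0)

lemma sm1_fdiff: "sm1 f \<Longrightarrow> f field_differentiable (at x)"
  using sm1_diff rdiff_iff by blast

lemma sm1_deriv[simp]: "sm1 f \<Longrightarrow> sm1 (deriv f)"
  unfolding sm1_def by (metis funpow_Suc_right o_apply)

lemma sm1_cont: "sm1 f \<Longrightarrow> continuous_on S f"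
  by (meson continuous_at_imp_continuous_on differentiable_imp_continuous_within sm1_diff)

lemma sm1_const[simp]: "sm1 (\<lambda>x. c)"
  by (rule sm1_coinduct[where S="\<lambda>g. \<exists>c. g = (\<lambda>x. c)"]) auto

inductive SP :: "(real \<Rightarrow> real) \<Rightarrow> bool" where
  SP_base: "sm1 f \<Longrightarrow> SP f"
| SP_mult: "sm1 f \<Longrightarrow> sm1 g \<Longrightarrow> SP (\<lambda>x. f x * g x)"
| SP_add: "SP f \<Longrightarrow> SP g \<Longrightarrow> SP (\<lambda>x. f x + g x)"
| SP_diff: "SP f \<Longrightarrow> SP g \<Longrightarrow> SP (\<lambda>x. f x - g x)"
| SP_minus: "SP f \<Longrightarrow> SP (\<lambda>x. - f x)"

lemma SP_step: "SP g \<Longrightarrow> (\<forall>x. g differentiable (at x)) \<and> SP (deriv g)"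
proof (induction rule: SP.induct)
  case (SP_base f)
  then show ?case by (simp add: SP.SP_base sm1_diff)
next
  case (SP_mult f g)
  have "deriv (\<lambda>x. f x * g x) = (\<lambda>x. deriv f x * g x + f x * deriv g x)"
    using SP_mult by (auto simp: sm1_fdiff)
  then show ?case using SP_mult by (simp add: SP.SP_add SP.SP_mult sm1_diff)
next
  case (SP_add f g)
  have "deriv (\<lambda>x. f x + g x) = (\<lambda>x. deriv f x + deriv g x)"
    using SP_add by (auto simp: rdiff_iff)
  then show ?case using SP_add by (simp add: SP.SP_add)
next
  case (SP_diff f g)
  have "deriv (\<lambda>x. f x - g x) = (\<lambda>x. deriv f x - deriv g x)"
    using SP_diff by (auto simp: rdiff_iff)
  then show ?case using SP_diff by (simp add: SP.SP_diff differentiable_diff)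
next
  case (SP_minus f)
  have "deriv (\<lambda>x. - f x) = (\<lambda>x. - deriv f x)"
    using SP_minus by (auto simp: rdiff_iff)
  then show ?case using SP_minus by (simp add: SP.SP_minus differentiable_minus)
qed

lemma SP_sm1: "SP f \<Longrightarrow> sm1 f"
  by (rule sm1_coinduct[where S=SP]) (auto dest: SP_step)

lemma sm1_mult[simp]: "sm1 f \<Longrightarrow> sm1 g \<Longrightarrow> sm1 (\<lambda>x. f x * g x)"
  by (rule SP_sm1, rule SP_mult)
lemma sm1_add[simp]: "sm1 f \<Longrightarrow> sm1 g \<Longrightarrow> sm1 (\<lambda>x. f x + g x)"
  by (rule SP_sm1, rule SP_add; rule SP_base)
lemma sm1_sub[simp]: "sm1 f \<Longrightarrow> sm1 g \<Longrightarrow> sm1 (\<lambda>x. f x - g x)"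
  by (rule SP_sm1, rule SP_diff; rule SP_base)
lemma sm1_minus[simp]: "sm1 f \<Longrightarrow> sm1 (\<lambda>x. - f x)"
  by (rule SP_sm1, rule SP_minus, rule SP_base)

lemma dmult[simp]: "sm1 f \<Longrightarrow> sm1 g \<Longrightarrow> deriv (\<lambda>x. f x * g x) = (\<lambda>x. deriv f x * g x + f x * deriv g x)"
  by (rule ext, subst deriv_mult) (auto intro: sm1_fdiff)
lemma dadd[simp]: "sm1 f \<Longrightarrow> sm1 g \<Longrightarrow> deriv (\<lambda>x. f x + g x) = (\<lambda>x. deriv f x + deriv g x)"
  by (rule ext, subst deriv_add) (auto intro: sm1_fdiff)
lemma dsub[simp]: "sm1 f \<Longrightarrow> sm1 g \<Longrightarrow> deriv (\<lambda>x. f x - g x) = (\<lambda>x. deriv f x - deriv g x)"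
  by (rule ext, subst deriv_diff) (auto intro: sm1_fdiff)
lemma dminus[simp]: "sm1 f \<Longrightarrow> deriv (\<lambda>x. - f x) = (\<lambda>x. - deriv f x)"
  by (rule ext, subst deriv_minus) (auto intro: sm1_fdiff)

definition per1 :: "(real \<Rightarrow> real) \<Rightarrow> bool" where "per1 f \<longleftrightarrow> (\<forall>x. f (x + 1) = f x)"

lemma per1_deriv[simp]: "per1 f \<Longrightarrow> per1 (deriv f)"
proof -
  assume p: "per1 f"
  have e: "(\<lambda>t. f (t + 1)) = f" using p by (auto simp: per1_def)
  have "(DERIV f (x+1) :> D) \<longleftrightarrow> (DERIV f x :> D)" for x D
    using DERIV_shift[of f D x 1] e by simp
  then show ?thesis unfolding per1_def deriv_def by simp
qed
lemma per1_const[simp]: "per1 (\<lambda>x. c)" by (simp add: per1_def)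
lemma per1_mult[simp]: "per1 f \<Longrightarrow> per1 g \<Longrightarrow> per1 (\<lambda>x. f x * g x)" by (simp add: per1_def)
lemma per1_add[simp]: "per1 f \<Longrightarrow> per1 g \<Longrightarrow> per1 (\<lambda>x. f x + g x)" by (simp add: per1_def)
lemma per1_sub[simp]: "per1 f \<Longrightarrow> per1 g \<Longrightarrow> per1 (\<lambda>x. f x - g x)" by (simp add: per1_def)
lemma per1_minus[simp]: "per1 f \<Longrightarrow> per1 (\<lambda>x. - f x)" by (simp add: per1_def)

lemma fd_real: "(g::real\<Rightarrow>real) differentiable at x \<Longrightarrow> frechet_derivative g (at x) h = h * deriv g x"
proof -
  assume "g differentiable at x"
  then have "DERIV g x :> deriv g x" by (simp add: DERIV_deriv_iff_real_differentiable)
  then have "(g has_derivative (*) (deriv g x)) (at x)" by (simp add: has_field_derivative_def)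
  then show ?thesis by (metis frechet_derivative_at mult.commute)
qed

lemma smooth_sm1: "smooth (f::real\<Rightarrow>real) \<Longrightarrow> sm1 f"
proof -
  assume s: "smooth f"
  have "iter_dderiv (replicate n 1) f = (deriv^^n) f" for n
  proof (induct n)
    case 0 then show ?case by simp
  next
    case (Suc n)
    have d: "(deriv^^n) f differentiable at x" for x
      using s Suc unfolding smooth_def by metis
    show ?case using Suc by (simp add: fd_real[OF d])
  qed
  then show ?thesis using s unfolding sm1_def smooth_def by metis
qed




definition xf :: "(real \<Rightarrow> real) \<Rightarrow> (real \<Rightarrow> real) \<Rightarrow> vfield" where
  "xf p q = (\<lambda>(x,y). (p x, q x))"

lemma xf_apply: "xf p q r = (p (fst r), q (fst r))"
  by (cases r) (simp add: xf_def)

lemma xf_has_derivative: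
  assumes "p differentiable at (fst r)" "q differentiable at (fst r)"
  shows "(xf p q has_derivative (\<lambda>h. fst h *\<^sub>R (deriv p (fst r), deriv q (fst r)))) (at r)"
proof -
  have dp: "(p has_derivative (\<lambda>h. h * deriv p (fst r))) (at (fst r))"
    using assms(1) DERIV_deriv_iff_real_differentiable has_field_derivative_def
    by (metis (no_types, lifting) ext mult.commute)
  have dq: "(q has_derivative (\<lambda>h. h * deriv q (fst r))) (at (fst r))"
    using assms(2) DERIV_deriv_iff_real_differentiable has_field_derivative_def
    by (metis (no_types, lifting) ext mult.commute)
  have "((\<lambda>r. (p (fst r), q (fst r))) has_derivative (\<lambda>h. (fst h * deriv p (fst r), fst h * deriv q (fst r)))) (at r)"
    by (intro has_derivative_Pair has_derivative_compose[OF has_derivative_fst[OF has_derivative_ident]] dp dq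
        [unfolded o_def])
  then show ?thesis
    by (simp add: xf_apply[abs_def] scaleR_prod_def)
qed

lemma xf_fd:
  assumes "sm1 p" "sm1 q"
  shows "frechet_derivative (xf p q) (at r) h = fst h *\<^sub>R (deriv p (fst r), deriv q (fst r))"
  using xf_has_derivative[of p r q] assms sm1_diff frechet_derivative_at by metis

lemma sm1_funpow: "sm1 f \<Longrightarrow> sm1 ((deriv^^n) f)"
  by (induct n) auto

lemma xf_smooth:
  assumes "sm1 p" "sm1 q"
  shows "smooth (xf p q)"
proof -
  have "iter_dderiv hs (xf p q) = (\<lambda>r. (\<Prod>h\<leftarrow>hs. fst h) *\<^sub>R xf ((deriv^^length hs) p) ((deriv^^length hs) q) r)" for hs
  proof (induct hs)
    case Nil then show ?case by simp
  next
    case (Cons h hs)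
    let ?c = "\<Prod>h\<leftarrow>hs. fst h"
    let ?P = "(deriv^^length hs) p" and ?Q = "(deriv^^length hs) q"
    have sP: "sm1 ?P" "sm1 ?Q" using assms by (auto intro: sm1_funpow)
    have "((\<lambda>r. ?c *\<^sub>R xf ?P ?Q r) has_derivative (\<lambda>k. ?c *\<^sub>R (fst k *\<^sub>R (deriv ?P (fst r), deriv ?Q (fst r))))) (at r)" for r
      by (intro has_derivative_scaleR_right xf_has_derivative sm1_diff sP)
    then have "frechet_derivative (\<lambda>r. ?c *\<^sub>R xf ?P ?Q r) (at r) h = ?c *\<^sub>R (fst h *\<^sub>R (deriv ?P (fst r), deriv ?Q (fst r)))" for r
      by (metis frechet_derivative_at)
    then show ?case using Cons by (auto simp: xf_apply mult.commute)
  qed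
  moreover have "sm1 ((deriv^^n) p)" "sm1 ((deriv^^n) q)" for n
    using assms by (auto intro: sm1_funpow)
  ultimately show ?thesis unfolding smooth_def
  proof (intro allI)
    fix hs :: "(real \<times> real) list" and x
    assume e: "\<And>hs. iter_dderiv hs (xf p q) = (\<lambda>r. (\<Prod>h\<leftarrow>hs. fst h) *\<^sub>R xf ((deriv^^length hs) p) ((deriv^^length hs) q) r)"
      and s: "\<And>n. sm1 ((deriv^^n) p)" "\<And>n. sm1 ((deriv^^n) q)"
    have "((\<lambda>r. (\<Prod>h\<leftarrow>hs. fst h) *\<^sub>R xf ((deriv^^length hs) p) ((deriv^^length hs) q) r) has_derivative (\<lambda>k. (\<Prod>h\<leftarrow>hs. fst h) *\<^sub>R (fst k *\<^sub>R (deriv ((deriv^^length hs) p) (fst x), deriv ((deriv^^length hs) q) (fst x))))) (at x)"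
      by (intro has_derivative_scaleR_right xf_has_derivative sm1_diff s)
    then show "iter_dderiv hs (xf p q) differentiable at x" unfolding e differentiable_def by blast
  qed
qed

lemma xf_VF: "sm1 p \<Longrightarrow> sm1 q \<Longrightarrow> per1 p \<Longrightarrow> per1 q \<Longrightarrow> xf p q \<in> VF"
  using xf_smooth[of p q] unfolding VF_def by (auto simp: xf_def per1_def)

lemma smooth_diff:
  fixes f g :: "'a::real_normed_vector \<Rightarrow> 'b::real_normed_vector"
  assumes "smooth f" "smooth g"
  shows "smooth (\<lambda>r. f r - g r)"
proof -
  have e: "iter_dderiv hs (\<lambda>r. f r - g r) = (\<lambda>r. iter_dderiv hs f r - iter_dderiv hs g r)" for hs
  proof (induct hs)
    case Nil then show ?case by simp
  next
    case (Cons h hs)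
    have d: "((\<lambda>r. iter_dderiv hs f r - iter_dderiv hs g r) has_derivative
       (\<lambda>k. frechet_derivative (iter_dderiv hs f) (at x) k - frechet_derivative (iter_dderiv hs g) (at x) k)) (at x)" for x
      using assms unfolding smooth_def by (intro has_derivative_diff frechet_derivative_works[THEN iffD1]) auto
    have "frechet_derivative (\<lambda>r. iter_dderiv hs f r - iter_dderiv hs g r) (at x) =
       (\<lambda>k. frechet_derivative (iter_dderiv hs f) (at x) k - frechet_derivative (iter_dderiv hs g) (at x) k)" for x
      using d[of x] frechet_derivative_at by metis
    then show ?case using Cons by simp
  qed
  show ?thesis using assms unfolding smooth_def e by (auto intro: differentiable_diff)
qed

lemma VF_diff: "u \<in> VF \<Longrightarrow> v \<in> VF \<Longrightarrow> (\<lambda>r. u r - v r) \<in> VF"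
  unfolding VF_def by (auto intro: smooth_diff)

lemma VF_diffble: "z \<in> VF \<Longrightarrow> z differentiable at r"
proof -
  assume "z \<in> VF"
  then have "iter_dderiv [] z differentiable at r" unfolding VF_def smooth_def by blast
  then show ?thesis by simp
qed

lemma VF_cont: "z \<in> VF \<Longrightarrow> continuous_on S z"
  by (simp add: continuous_at_imp_continuous_on differentiable_imp_continuous_within VF_diffble)

lemma VF_dcont: "z \<in> VF \<Longrightarrow> continuous_on S (\<lambda>r. frechet_derivative z (at r) e)"
proof -
  assume "z \<in> VF"
  then have "iter_dderiv [e] z differentiable at r" for r unfolding VF_def smooth_def by blast
  then have "(\<lambda>r. frechet_derivative z (at r) e) differentiable at r" for r by simp
  then show ?thesis
    by (simp add: continuous_at_imp_continuous_on differentiable_imp_continuous_within)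
qed

lemma xf_cont: "sm1 p \<Longrightarrow> sm1 q \<Longrightarrow> continuous_on S (xf p q)"
  unfolding xf_def by (auto intro!: continuous_intros sm1_cont[THEN continuous_on_compose2[where g=p]]
     sm1_cont[THEN continuous_on_compose2[where g=q]] simp: case_prod_unfold)

lemma vbracket_xf:
  assumes "sm1 p1" "sm1 q1" "sm1 p2" "sm1 q2"
  shows "vbracket (xf p1 q1) (xf p2 q2) = xf (\<lambda>x. p1 x * deriv p2 x - p2 x * deriv p1 x) (\<lambda>x. p1 x * deriv q2 x - p2 x * deriv q1 x)"
  proof (rule ext)
  fix r :: "real \<times> real"
  show "vbracket (xf p1 q1) (xf p2 q2) r = xf (\<lambda>x. p1 x * deriv p2 x - p2 x * deriv p1 x) (\<lambda>x. p1 x * deriv q2 x - p2 x * deriv q1 x) r"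
    unfolding vbracket_def xf_fd[OF assms(1,2)] xf_fd[OF assms(3,4)] by (simp add: xf_apply algebra_simps)
qed




lemma cbox01: "cbox (0::real) 1 = {0..1}" by simp

lemma zero_int_x:
  fixes \<Phi> :: "real \<times> real \<Rightarrow> real"
  assumes d: "\<And>r. (\<Phi> has_derivative \<Phi>' r) (at r)"
    and c: "continuous_on UNIV (\<lambda>r. \<Phi>' r (1,0))"
    and p: "\<And>x y. \<Phi> (x+1, y) = \<Phi> (x,y)"
  shows "integral (cbox (0,0) (1,1)) (\<lambda>r. \<Phi>' r (1,0)) = 0"
proof -
  have c2: "continuous_on (cbox (0,0) (1,1)) (\<lambda>(x,y). \<Phi>' (x,y) (1,0))"
    using continuous_on_subset[OF c] by (auto simp: case_prod_unfold)
  have "integral (cbox (0,0) (1,1)) (\<lambda>r. \<Phi>' r (1,0))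
      = integral (cbox 0 1) (\<lambda>x. integral (cbox 0 1) (\<lambda>y. \<Phi>' (x,y) (1,0)))"
    using integral_prod_continuous[OF continuous_on_subset[OF c]] by auto
  also have "\<dots> = integral (cbox 0 1) (\<lambda>y. integral (cbox 0 1) (\<lambda>x. \<Phi>' (x,y) (1,0)))"
    using integral_swap_continuous[where f="\<lambda>x y. \<Phi>' (x,y) (1,0)", OF c2] by simp
  also have "\<dots> = integral (cbox 0 1) (\<lambda>y::real. 0::real)"
  proof (rule integral_cong)
    fix y :: real assume "y \<in> cbox 0 1"
    have lin: "linear (\<Phi>' r)" for r using d has_derivative_bounded_linear bounded_linear.linear by blast
    have "((\<lambda>x. \<Phi> (x,y)) has_vector_derivative \<Phi>' (x,y) (1,0)) (at x within {0..1})" for x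
    proof -
      have "((\<lambda>x. (x,y)) has_derivative (\<lambda>h. (h, 0))) (at x)"
        by (auto intro!: derivative_eq_intros)
      from has_derivative_compose[OF this d]
      have "((\<lambda>x. \<Phi> (x,y)) has_derivative (\<lambda>h. \<Phi>' (x,y) (h,0))) (at x)" by (simp add: o_def)
      moreover have "\<Phi>' (x,y) (h,0) = h *\<^sub>R \<Phi>' (x,y) (1,0)" for h :: real
      proof -
        have "\<Phi>' (x,y) (h *\<^sub>R (1,0)) = h *\<^sub>R \<Phi>' (x,y) (1,0)" by (rule linear_scale[OF lin])
        then show ?thesis by simp
      qed
      ultimately have "((\<lambda>x. \<Phi> (x,y)) has_derivative (\<lambda>h. h *\<^sub>R \<Phi>' (x,y) (1,0))) (at x)"
        by (metis (no_types, lifting) ext)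
      then show ?thesis unfolding has_vector_derivative_def
        by (rule has_derivative_at_withinI)
    qed
    then have "((\<lambda>x. \<Phi>' (x,y) (1,0)) has_integral (\<Phi> (1,y) - \<Phi> (0,y))) {0..1}"
      by (intro fundamental_theorem_of_calculus) auto
    then show "integral (cbox 0 1) (\<lambda>x. \<Phi>' (x,y) (1,0)) = 0"
      using p[of 0 y] by (simp add: integral_unique)
  qed
  finally show ?thesis by simp
qed

lemma zero_int_y:
  fixes \<Phi> :: "real \<times> real \<Rightarrow> real"
  assumes d: "\<And>r. (\<Phi> has_derivative \<Phi>' r) (at r)"
    and c: "continuous_on UNIV (\<lambda>r. \<Phi>' r (0,1))"
    and p: "\<And>x y. \<Phi> (x, y+1) = \<Phi> (x,y)"
  shows "integral (cbox (0,0) (1,1)) (\<lambda>r. \<Phi>' r (0,1)) = 0"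
proof -
  have "integral (cbox (0,0) (1,1)) (\<lambda>r. \<Phi>' r (0,1))
      = integral (cbox 0 1) (\<lambda>x. integral (cbox 0 1) (\<lambda>y. \<Phi>' (x,y) (0,1)))"
    using integral_prod_continuous[OF continuous_on_subset[OF c]] by auto
  also have "\<dots> = integral (cbox 0 1) (\<lambda>x::real. 0::real)"
  proof (rule integral_cong)
    fix x :: real assume "x \<in> cbox 0 1"
    have lin: "linear (\<Phi>' r)" for r using d has_derivative_bounded_linear bounded_linear.linear by blast
    have "((\<lambda>y. \<Phi> (x,y)) has_vector_derivative \<Phi>' (x,y) (0,1)) (at y within {0..1})" for y
    proof -
      have "((\<lambda>y. (x,y)) has_derivative (\<lambda>h. (0, h))) (at y)"
        by (auto intro!: derivative_eq_intros)
      from has_derivative_compose[OF this d]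
      have "((\<lambda>y. \<Phi> (x,y)) has_derivative (\<lambda>h. \<Phi>' (x,y) (0,h))) (at y)" by (simp add: o_def)
      moreover have "\<Phi>' (x,y) (0,h) = h *\<^sub>R \<Phi>' (x,y) (0,1)" for h :: real
      proof -
        have "\<Phi>' (x,y) (h *\<^sub>R (0,1)) = h *\<^sub>R \<Phi>' (x,y) (0,1)" by (rule linear_scale[OF lin])
        then show ?thesis by simp
      qed
      ultimately have "((\<lambda>y. \<Phi> (x,y)) has_derivative (\<lambda>h. h *\<^sub>R \<Phi>' (x,y) (0,1))) (at y)"
        by (metis (no_types, lifting) ext)
      then show ?thesis unfolding has_vector_derivative_def
        by (rule has_derivative_at_withinI)
    qed
    then have "((\<lambda>y. \<Phi>' (x,y) (0,1)) has_integral (\<Phi> (x,1) - \<Phi> (x,0))) {0..1}"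
      by (intro fundamental_theorem_of_calculus) auto
    then show "integral (cbox 0 1) (\<lambda>y. \<Phi>' (x,y) (0,1)) = 0"
      using p[of x 0] by (simp add: integral_unique)
  qed
  finally show ?thesis by simp
qed

lemma VF_per: "z \<in> VF \<Longrightarrow> z (x+1, y) = z (x,y) \<and> z (x, y+1) = z (x,y)"
  unfolding VF_def by blast

lemma ibp_common:
  assumes "sm1 P" "sm1 Q" "z \<in> VF"
  shows "((\<lambda>r. inner (xf P Q r) (z r)) has_derivative
     (\<lambda>h. inner (xf P Q r) (frechet_derivative z (at r) h) + inner (fst h *\<^sub>R (deriv P (fst r), deriv Q (fst r))) (z r))) (at r)"
  by (intro has_derivative_inner xf_has_derivative sm1_diff assms frechet_derivative_works[THEN iffD1] VF_diffble)

lemma ibp_x: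
  assumes "sm1 P" "sm1 Q" "per1 P" "per1 Q" "z \<in> VF"
  shows "integral (cbox (0,0) (1,1)) (\<lambda>r. inner (xf P Q r) (frechet_derivative z (at r) (1,0)) + inner (xf (deriv P) (deriv Q) r) (z r)) = 0"
proof -
  have "integral (cbox (0,0) (1,1)) (\<lambda>r. inner (xf P Q r) (frechet_derivative z (at r) (1,0)) + inner (fst (1::real,0::real) *\<^sub>R (deriv P (fst r), deriv Q (fst r))) (z r)) = 0"
  proof (rule zero_int_x[OF ibp_common[OF assms(1,2,5)]])
    show "continuous_on UNIV (\<lambda>r. inner (xf P Q r) (frechet_derivative z (at r) (1, 0)) + inner (fst (1::real, 0::real) *\<^sub>R (deriv P (fst r), deriv Q (fst r))) (z r))"
    proof -
      have c1: "continuous_on UNIV (\<lambda>r::real\<times>real. (deriv P (fst r), deriv Q (fst r)))"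
        using xf_cont[of "deriv P" "deriv Q" UNIV] assms by (simp add: xf_apply[abs_def])
      have c2: "continuous_on UNIV (xf P Q)" using xf_cont assms by blast
      have c3: "continuous_on UNIV z" "continuous_on UNIV (\<lambda>r. frechet_derivative z (at r) (1,0))"
        using VF_cont VF_dcont assms by blast+
      show ?thesis by (simp, intro continuous_intros c1 c2 c3)
    qed
    show "inner (xf P Q (x + 1, y)) (z (x + 1, y)) = inner (xf P Q (x, y)) (z (x, y))" for x y
      using assms VF_per[OF assms(5)] by (simp add: xf_apply per1_def)
  qed
  then show ?thesis by (simp add: xf_apply)
qed

lemma ibp_y:
  assumes "sm1 P" "sm1 Q" "z \<in> VF"
  shows "integral (cbox (0,0) (1,1)) (\<lambda>r. inner (xf P Q r) (frechet_derivative z (at r) (0,1))) = 0"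
proof -
  have "integral (cbox (0,0) (1,1)) (\<lambda>r. inner (xf P Q r) (frechet_derivative z (at r) (0,1)) + inner (fst (0::real,1::real) *\<^sub>R (deriv P (fst r), deriv Q (fst r))) (z r)) = 0"
  proof (rule zero_int_y[OF ibp_common[OF assms(1,2,3)]])
    show "continuous_on UNIV (\<lambda>r. inner (xf P Q r) (frechet_derivative z (at r) (0, 1)) + inner (fst (0::real, 1::real) *\<^sub>R (deriv P (fst r), deriv Q (fst r))) (z r))"
    proof -
      have c2: "continuous_on UNIV (xf P Q)" using xf_cont assms by blast
      have c3: "continuous_on UNIV (\<lambda>r. frechet_derivative z (at r) (0,1))" "continuous_on UNIV z"
        using VF_dcont VF_cont assms by blast+
      show ?thesis by (simp, intro continuous_intros c2 c3)
    qed
    show "inner (xf P Q (x, y + 1)) (z (x, y + 1)) = inner (xf P Q (x, y)) (z (x, y))" for x y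
      using assms VF_per[OF assms(3)] by (simp add: xf_apply)
  qed
  then show ?thesis by (simp add: zero_prod_def[symmetric])
qed




lemma per_nat:
  assumes "\<And>x y. d (x+1, y) = d (x,y)"
  shows "d (t + real n, y) = d (t, y)"
proof (induct n)
  case 0 then show ?case by simp
next
  case (Suc n)
  have "d (t + real (Suc n), y) = d ((t + real n) + 1, y)" by (simp add: algebra_simps)
  also have "\<dots> = d (t + real n, y)" by (rule assms)
  finally show ?case using Suc by simp
qed

lemma per_int:
  assumes "\<And>x y. d (x+1, y) = d (x,y)"
  shows "d (t + real_of_int k, y) = d (t, y)"
proof (cases "k \<ge> 0")
  case True
  then show ?thesis using per_nat[of d t "nat k", OF assms] by simp
next
  case False
  then have "d ((t + real_of_int k) + real (nat (-k)), y) = d (t + real_of_int k, y)"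
    using per_nat[of d "t + real_of_int k" "nat (-k)", OF assms] by simp
  then show ?thesis using False by simp
qed

lemma per_ext:
  fixes d :: vfield
  assumes px: "\<And>x y. d (x+1, y) = d (x,y)" and py: "\<And>x y. d (x, y+1) = d (x,y)"
    and z: "\<And>r. r \<in> cbox (0,0) (1,1) \<Longrightarrow> d r = 0"
  shows "d r = 0"
proof (cases r)
  case (Pair x y)
  let ?x = "x - of_int (floor x)" and ?y = "y - of_int (floor y)"
  have py': "\<And>x y. (\<lambda>(a,b). d (b,a)) (x+1, y) = (\<lambda>(a,b). d (b,a)) (x,y)" using py by simp
  have "d (x,y) = d (?x, y)" using per_int[of d ?x "floor x", OF px] by simp
  also have "\<dots> = d (?x, ?y)" using per_int[of "\<lambda>(a,b). d (b,a)" ?y "floor y", OF py'] by simp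
  also have "\<dots> = 0"
  proof (rule z)
    have "0 \<le> ?x" "?x \<le> 1" "0 \<le> ?y" "?y \<le> 1"
      using floor_correct[of x] floor_correct[of y] by linarith+
    then show "(?x, ?y) \<in> cbox (0,0) (1,1)" by simp
  qed
  finally show ?thesis using Pair by simp
qed

lemma VF_unique:
  assumes a: "a \<noteq> 0" and w: "w1 \<in> VF" "w2 \<in> VF"
    and e: "\<forall>z\<in>VF. L2ip a w1 z = L2ip a w2 z"
  shows "w1 = w2"
proof -
  let ?d = "\<lambda>r. w1 r - w2 r"
  have dV: "?d \<in> VF" using VF_diff w by blast
  have i1: "(\<lambda>r. inner (w1 r) (?d r)) integrable_on cbox (0,0) (1,1)"
    by (intro integrable_continuous continuous_intros VF_cont w dV)
  have i2: "(\<lambda>r. inner (w2 r) (?d r)) integrable_on cbox (0,0) (1,1)"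
    by (intro integrable_continuous continuous_intros VF_cont w dV)
  have "L2ip a w1 ?d = L2ip a w2 ?d" using e dV by blast
  then have "integral (cbox (0,0) (1,1)) (\<lambda>r. inner (w1 r) (?d r)) - integral (cbox (0,0) (1,1)) (\<lambda>r. inner (w2 r) (?d r)) = 0"
    using a by (simp add: L2ip_def)
  then have "integral (cbox (0,0) (1,1)) (\<lambda>r. inner (w1 r) (?d r) - inner (w2 r) (?d r)) = 0"
    using integral_diff[OF i1 i2] by simp
  then have "integral (cbox (0,0) (1,1)) (\<lambda>r. inner (?d r) (?d r)) = 0"
    by (simp add: inner_diff_left)
  moreover have ci: "continuous_on (cbox (0,0) (1,1)) (\<lambda>r. inner (?d r) (?d r))"
    by (intro continuous_intros VF_cont w dV)
  ultimately have hi: "((\<lambda>r. inner (?d r) (?d r)) has_integral 0) (cbox (0,0) (1,1))"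
    using integrable_integral[OF integrable_continuous[OF ci]] by simp
  have ne: "box (0::real,0::real) (1,1) \<noteq> {}"
  proof -
    have "(1/2, 1/2) \<in> box (0::real,0::real) (1,1)" by (auto simp: mem_box Basis_prod_def)
    then show ?thesis by blast
  qed
  have "inner (?d r) (?d r) = 0" if "r \<in> cbox (0,0) (1,1)" for r
    by (rule has_integral_0_cbox_imp_0[OF ci _ hi ne that]) simp
  then have z: "?d r = 0" if "r \<in> cbox (0,0) (1,1)" for r using that by simp
  have "?d r = 0" for r
    by (rule per_ext[of ?d, OF _ _ z]) (use w in \<open>auto simp: VF_def\<close>)
  then show ?thesis by (auto simp: fun_eq_iff)
qed

lemma cont_xfD: "sm1 P \<Longrightarrow> sm1 Q \<Longrightarrow> z \<in> VF \<Longrightarrow> continuous_on S (\<lambda>r. inner (xf P Q r) (frechet_derivative z (at r) e))"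
  by (intro continuous_intros xf_cont VF_dcont)
lemma cont_xfz: "sm1 P \<Longrightarrow> sm1 Q \<Longrightarrow> z \<in> VF \<Longrightarrow> continuous_on S (\<lambda>r. inner (xf P Q r) (z r))"
  by (intro continuous_intros xf_cont VF_cont)

lemma fd_lin: "z \<in> VF \<Longrightarrow> linear (frechet_derivative z (at r))"
  using VF_diffble frechet_derivative_works has_derivative_bounded_linear bounded_linear.linear by blast

lemma fd_pair: "z \<in> VF \<Longrightarrow> frechet_derivative z (at r) (a, b) = a *\<^sub>R frechet_derivative z (at r) (1,0) + b *\<^sub>R frechet_derivative z (at r) (0,1)"
proof -
  assume z: "z \<in> VF"
  have "frechet_derivative z (at r) (a *\<^sub>R (1,0) + b *\<^sub>R (0,1)) = a *\<^sub>R frechet_derivative z (at r) (1,0) + b *\<^sub>R frechet_derivative z (at r) (0,1)"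
    using fd_lin[OF z] by (simp only: linear_add linear_scale)
  moreover have "(a *\<^sub>R (1,0) + b *\<^sub>R (0,1)) = (a,b)" by simp
  ultimately show ?thesis by simp
qed

lemma adstar_xf:
  assumes a: "a \<noteq> 0" and s: "sm1 p1" "sm1 q1" "sm1 p2" "sm1 q2" and p: "per1 p1" "per1 q1" "per1 p2" "per1 q2"
  shows "adstar a (xf p1 q1) (xf p2 q2) =
    xf (\<lambda>x. - (p1 x * deriv p2 x + 2 * deriv p1 x * p2 x + deriv q1 x * q2 x))
       (\<lambda>x. - (p1 x * deriv q2 x + deriv p1 x * q2 x))" (is "_ = xf ?W1 ?W2")
proof -
  have sW: "sm1 ?W1" "sm1 ?W2" using s by simp_all
  have pW: "per1 ?W1" "per1 ?W2" using s p by simp_all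
  have WV: "xf ?W1 ?W2 \<in> VF" by (rule xf_VF[OF sW pW])
  have key: "\<forall>z\<in>VF. L2ip a (xf ?W1 ?W2) z = L2ip a (xf p2 q2) (vbracket (xf p1 q1) z)"
  proof
    fix z assume z: "z \<in> VF"
    let ?A = "\<lambda>r. inner (xf (\<lambda>x. p1 x * p2 x) (\<lambda>x. p1 x * q2 x) r) (frechet_derivative z (at r) (1,0))
        + inner (xf (deriv (\<lambda>x. p1 x * p2 x)) (deriv (\<lambda>x. p1 x * q2 x)) r) (z r)"
    let ?B = "\<lambda>r. inner (xf (\<lambda>x. q1 x * p2 x) (\<lambda>x. q1 x * q2 x) r) (frechet_derivative z (at r) (0,1))"
    let ?C = "\<lambda>r. inner (xf ?W1 ?W2 r) (z r)"
    have pw: "inner (xf p2 q2 r) (vbracket (xf p1 q1) z r) = ?A r + ?B r + ?C r" for r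
    proof -
      obtain z1 z2 where zr: "z r = (z1, z2)" by (cases "z r")
      obtain a1 a2 where ar: "frechet_derivative z (at r) (1,0) = (a1, a2)" by (cases "frechet_derivative z (at r) (1,0)")
      obtain b1 b2 where br: "frechet_derivative z (at r) (0,1) = (b1, b2)" by (cases "frechet_derivative z (at r) (0,1)")
      have e1: "vbracket (xf p1 q1) z r = p1 (fst r) *\<^sub>R (a1,a2) + q1 (fst r) *\<^sub>R (b1,b2) - z1 *\<^sub>R (deriv p1 (fst r), deriv q1 (fst r))"
        unfolding vbracket_def xf_fd[OF s(1,2)] xf_apply fd_pair[OF z, of r "p1 (fst r)" "q1 (fst r)"] ar br zr
        by simp
      show ?thesis
        unfolding e1 using s
        by (simp add: xf_apply zr ar br algebra_simps)
    qed
    have iA: "?A integrable_on cbox (0,0) (1,1)"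
      using s z by (intro integrable_continuous continuous_intros cont_xfD cont_xfz) auto
    have iB: "?B integrable_on cbox (0,0) (1,1)"
      using s z by (intro integrable_continuous continuous_intros cont_xfD cont_xfz) auto
    have iC: "?C integrable_on cbox (0,0) (1,1)"
      using sW z by (intro integrable_continuous continuous_intros cont_xfD cont_xfz) auto
    have zA: "integral (cbox (0,0) (1,1)) ?A = 0"
      by (rule ibp_x) (use s p z in auto)
    have zB: "integral (cbox (0,0) (1,1)) ?B = 0"
      by (rule ibp_y) (use s p z in auto)
    have "L2ip a (xf p2 q2) (vbracket (xf p1 q1) z) = a * integral (cbox (0,0) (1,1)) (\<lambda>r. ?A r + ?B r + ?C r)"
      unfolding L2ip_def pw ..
    also have "\<dots> = a * (integral (cbox (0,0) (1,1)) ?A + integral (cbox (0,0) (1,1)) ?B + integral (cbox (0,0) (1,1)) ?C)"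
      using integral_add[OF integrable_add[OF iA iB] iC] integral_add[OF iA iB] by simp
    also have "\<dots> = L2ip a (xf ?W1 ?W2) z" unfolding L2ip_def zA zB by simp
    finally show "L2ip a (xf ?W1 ?W2) z = L2ip a (xf p2 q2) (vbracket (xf p1 q1) z)" ..
  qed
  show ?thesis unfolding adstar_def
  proof (rule the_equality)
    show "xf ?W1 ?W2 \<in> VF \<and> (\<forall>z\<in>VF. L2ip a (xf ?W1 ?W2) z = L2ip a (xf p2 q2) (vbracket (xf p1 q1) z))"
      using WV key by blast
    fix w assume "w \<in> VF \<and> (\<forall>z\<in>VF. L2ip a w z = L2ip a (xf p2 q2) (vbracket (xf p1 q1) z))"
    then show "w = xf ?W1 ?W2" using VF_unique[OF a _ WV] key by auto
  qed
qed




lemma sm1_divc[simp]: "sm1 f \<Longrightarrow> sm1 (\<lambda>x. f x / c)"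
proof -
  assume f: "sm1 f"
  have e: "(\<lambda>x. f x / c) = (\<lambda>x. f x * (1/c))" by simp
  show ?thesis by (subst e, rule sm1_mult) (simp_all add: f)
qed
lemma per1_divc[simp]: "per1 f \<Longrightarrow> per1 (\<lambda>x. f x / c)" by (simp add: per1_def)
lemma ddivc[simp]: "sm1 f \<Longrightarrow> deriv (\<lambda>x. f x / c) = (\<lambda>x. deriv f x / c)"
proof -
  assume f: "sm1 f"
  have e: "(\<lambda>x. f x / c) = (\<lambda>x. f x * (1/c))" by simp
  show ?thesis by (subst e, subst dmult) (simp_all add: f)
qed

definition n1 :: "(real \<Rightarrow> real) \<Rightarrow> (real \<Rightarrow> real) \<Rightarrow> (real \<Rightarrow> real) \<Rightarrow> (real \<Rightarrow> real) \<Rightarrow> real \<Rightarrow> real" where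
  "n1 p1 q1 p2 q2 = (\<lambda>x. 2 * (p1 x * deriv p2 x) + deriv p1 x * p2 x + (1/2) * (deriv q1 x * q2 x) + (1/2) * (q1 x * deriv q2 x))"
definition n2 :: "(real \<Rightarrow> real) \<Rightarrow> (real \<Rightarrow> real) \<Rightarrow> (real \<Rightarrow> real) \<Rightarrow> (real \<Rightarrow> real) \<Rightarrow> real \<Rightarrow> real" where
  "n2 p1 q1 p2 q2 = (\<lambda>x. p1 x * deriv q2 x + (1/2) * (deriv p1 x * q2 x) + (1/2) * (deriv p2 x * q1 x))"
definition b1 :: "(real \<Rightarrow> real) \<Rightarrow> (real \<Rightarrow> real) \<Rightarrow> (real \<Rightarrow> real) \<Rightarrow> (real \<Rightarrow> real) \<Rightarrow> real \<Rightarrow> real" where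
  "b1 p1 q1 p2 q2 = (\<lambda>x. p1 x * deriv p2 x - p2 x * deriv p1 x)"
definition b2 :: "(real \<Rightarrow> real) \<Rightarrow> (real \<Rightarrow> real) \<Rightarrow> (real \<Rightarrow> real) \<Rightarrow> (real \<Rightarrow> real) \<Rightarrow> real \<Rightarrow> real" where
  "b2 p1 q1 p2 q2 = (\<lambda>x. p1 x * deriv q2 x - p2 x * deriv q1 x)"

lemma sm1_n: "sm1 p1 \<Longrightarrow> sm1 q1 \<Longrightarrow> sm1 p2 \<Longrightarrow> sm1 q2 \<Longrightarrow>
   sm1 (n1 p1 q1 p2 q2) \<and> sm1 (n2 p1 q1 p2 q2) \<and> sm1 (b1 p1 q1 p2 q2) \<and> sm1 (b2 p1 q1 p2 q2)"
  unfolding n1_def n2_def b1_def b2_def by simp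
lemma per1_n: "per1 p1 \<Longrightarrow> per1 q1 \<Longrightarrow> per1 p2 \<Longrightarrow> per1 q2 \<Longrightarrow>
   per1 (n1 p1 q1 p2 q2) \<and> per1 (n2 p1 q1 p2 q2) \<and> per1 (b1 p1 q1 p2 q2) \<and> per1 (b2 p1 q1 p2 q2)"
  unfolding n1_def n2_def b1_def b2_def by simp

lemma LC_xf:
  assumes a: "a \<noteq> 0" and s: "sm1 p1" "sm1 q1" "sm1 p2" "sm1 q2" and p: "per1 p1" "per1 q1" "per1 p2" "per1 q2"
  shows "LCconn a (xf p1 q1) (xf p2 q2) = xf (n1 p1 q1 p2 q2) (n2 p1 q1 p2 q2)"
  unfolding LCconn_def vbracket_xf[OF s] adstar_xf[OF a s p] adstar_xf[OF a s(3,4,1,2) p(3,4,1,2)]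
  by (auto simp: fun_eq_iff xf_apply n1_def n2_def algebra_simps)

lemma curv_xf:
  assumes a: "a \<noteq> 0" and s: "sm1 p1" "sm1 q1" "sm1 p2" "sm1 q2" and p: "per1 p1" "per1 q1" "per1 p2" "per1 q2"
  shows "curv a (xf p1 q1) (xf p2 q2) (xf p2 q2) = (\<lambda>r.
     xf (n1 p1 q1 (n1 p2 q2 p2 q2) (n2 p2 q2 p2 q2)) (n2 p1 q1 (n1 p2 q2 p2 q2) (n2 p2 q2 p2 q2)) r
   - xf (n1 p2 q2 (n1 p1 q1 p2 q2) (n2 p1 q1 p2 q2)) (n2 p2 q2 (n1 p1 q1 p2 q2) (n2 p1 q1 p2 q2)) r
   - xf (n1 (b1 p1 q1 p2 q2) (b2 p1 q1 p2 q2) p2 q2) (n2 (b1 p1 q1 p2 q2) (b2 p1 q1 p2 q2) p2 q2) r)"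
proof -
  note sn = sm1_n[OF s(3,4,3,4)] sm1_n[OF s] and pn = per1_n[OF p(3,4,3,4)] per1_n[OF p]
  have br: "vbracket (xf p1 q1) (xf p2 q2) = xf (b1 p1 q1 p2 q2) (b2 p1 q1 p2 q2)"
    unfolding vbracket_xf[OF s] b1_def b2_def ..
  show ?thesis unfolding curv_def br
    using sn pn s p by (simp add: LC_xf[OF a])
qed

lemma sq_int:
  fixes G :: "real \<Rightarrow> real"
  assumes "continuous_on UNIV G"
  shows "integral (cbox (0,0) (1,1)) (\<lambda>r::real\<times>real. G (fst r)) = integral {0..1} G"
proof -
  have "continuous_on UNIV (\<lambda>r::real\<times>real. G (fst r))"
    by (intro continuous_on_compose2[OF assms] continuous_intros) auto
  then have c: "continuous_on (cbox (0::real,0::real) (1,1)) (\<lambda>r::real\<times>real. G (fst r))"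
    by (rule continuous_on_subset) auto
  have "integral (cbox (0,0) (1,1)) (\<lambda>r::real\<times>real. G (fst r)) = integral (cbox 0 1) (\<lambda>x. integral (cbox 0 1) (\<lambda>y::real. G (fst (x,y))))"
    by (rule integral_prod_continuous[OF c])
  then show ?thesis by simp
qed

lemma sec_S_xf:
  assumes a: "a \<noteq> 0" and s: "sm1 p1" "sm1 q1" "sm1 p2" "sm1 q2" and p: "per1 p1" "per1 q1" "per1 p2" "per1 q2"
  shows "sec_S a (xf p1 q1) (xf p2 q2) = a * integral {0..1} (\<lambda>x.
      (n1 p1 q1 (n1 p2 q2 p2 q2) (n2 p2 q2 p2 q2) x - n1 p2 q2 (n1 p1 q1 p2 q2) (n2 p1 q1 p2 q2) x
        - n1 (b1 p1 q1 p2 q2) (b2 p1 q1 p2 q2) p2 q2 x) * p1 x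
    + (n2 p1 q1 (n1 p2 q2 p2 q2) (n2 p2 q2 p2 q2) x - n2 p2 q2 (n1 p1 q1 p2 q2) (n2 p1 q1 p2 q2) x
        - n2 (b1 p1 q1 p2 q2) (b2 p1 q1 p2 q2) p2 q2 x) * q1 x)" (is "_ = a * integral _ ?G")
proof -
  note sn = sm1_n[OF s(3,4,3,4)] sm1_n[OF s]
  have sG: "sm1 ?G" using sn s sm1_n[of "b1 p1 q1 p2 q2" "b2 p1 q1 p2 q2" p2 q2] sm1_n[of p1 q1 "n1 p2 q2 p2 q2" "n2 p2 q2 p2 q2"]
     sm1_n[of p2 q2 "n1 p1 q1 p2 q2" "n2 p1 q1 p2 q2"] by simp
  show ?thesis unfolding sec_S_def curv_xf[OF a s p] L2ip_def
    using sq_int[OF sm1_cont[OF sG]] by (simp add: xf_apply)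
qed




lemma ftc_per: "sm1 P \<Longrightarrow> per1 P \<Longrightarrow> integral {0..1} (deriv P) = 0"
proof -
  assume s: "sm1 P" and p: "per1 P"
  have "(P has_vector_derivative deriv P x) (at x within {0..1})" for x
    using sm1_diff[OF s, of x] DERIV_deriv_iff_real_differentiable has_real_derivative_iff_has_vector_derivative
      has_vector_derivative_at_within by blast
  then have "(deriv P has_integral (P 1 - P 0)) {0..1}" by (intro fundamental_theorem_of_calculus) auto
  moreover have "P 1 = P 0" using p[unfolded per1_def, rule_format, of 0] by simp
  ultimately show ?thesis by (simp add: integral_unique)
qed

lemma int_split:
  assumes "sm1 T" "sm1 P" "per1 P" "\<And>x. G x = T x + deriv P x"
  shows "integral {0..1} G = integral {0..1} T"
proof -
  have "G = (\<lambda>x. T x + deriv P x)" using assms(4) by auto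
  moreover have "T integrable_on {0..1}" "deriv P integrable_on {0..1}"
    using assms by (auto intro!: integrable_continuous_interval sm1_cont)
  ultimately show ?thesis using ftc_per[OF assms(2,3)] by (simp add: integral_add)
qed

lemma part1_identity:
  assumes "sm1 f" "sm1 g"
  shows "(n1 f (\<lambda>_. 0) (n1 g (\<lambda>_. 0) g (\<lambda>_. 0)) (n2 g (\<lambda>_. 0) g (\<lambda>_. 0)) x - n1 g (\<lambda>_. 0) (n1 f (\<lambda>_. 0) g (\<lambda>_. 0)) (n2 f (\<lambda>_. 0) g (\<lambda>_. 0)) x
        - n1 (b1 f (\<lambda>_. 0) g (\<lambda>_. 0)) (b2 f (\<lambda>_. 0) g (\<lambda>_. 0)) g (\<lambda>_. 0) x) * f x
    + (n2 f (\<lambda>_. 0) (n1 g (\<lambda>_. 0) g (\<lambda>_. 0)) (n2 g (\<lambda>_. 0) g (\<lambda>_. 0)) x - n2 g (\<lambda>_. 0) (n1 f (\<lambda>_. 0) g (\<lambda>_. 0)) (n2 f (\<lambda>_. 0) g (\<lambda>_. 0)) x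
        - n2 (b1 f (\<lambda>_. 0) g (\<lambda>_. 0)) (b2 f (\<lambda>_. 0) g (\<lambda>_. 0)) g (\<lambda>_. 0) x) * 0
    = (f x * deriv g x - g x * deriv f x)\<^sup>2 + deriv (\<lambda>x. f x * f x * g x * deriv g x - f x * deriv f x * g x * g x) x"
  using assms by (simp add: n1_def n2_def b1_def b2_def power2_eq_square algebra_simps)

lemma part2_identity:
  assumes "sm1 f"
  shows "(n1 f (\<lambda>_. 0) (n1 (\<lambda>_. 0) (\<lambda>x. f x * f x) (\<lambda>_. 0) (\<lambda>x. f x * f x)) (n2 (\<lambda>_. 0) (\<lambda>x. f x * f x) (\<lambda>_. 0) (\<lambda>x. f x * f x)) x - n1 (\<lambda>_. 0) (\<lambda>x. f x * f x) (n1 f (\<lambda>_. 0) (\<lambda>_. 0) (\<lambda>x. f x * f x)) (n2 f (\<lambda>_. 0) (\<lambda>_. 0) (\<lambda>x. f x * f x)) x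
        - n1 (b1 f (\<lambda>_. 0) (\<lambda>_. 0) (\<lambda>x. f x * f x)) (b2 f (\<lambda>_. 0) (\<lambda>_. 0) (\<lambda>x. f x * f x)) (\<lambda>_. 0) (\<lambda>x. f x * f x) x) * f x
    + (n2 f (\<lambda>_. 0) (n1 (\<lambda>_. 0) (\<lambda>x. f x * f x) (\<lambda>_. 0) (\<lambda>x. f x * f x)) (n2 (\<lambda>_. 0) (\<lambda>x. f x * f x) (\<lambda>_. 0) (\<lambda>x. f x * f x)) x - n2 (\<lambda>_. 0) (\<lambda>x. f x * f x) (n1 f (\<lambda>_. 0) (\<lambda>_. 0) (\<lambda>x. f x * f x)) (n2 f (\<lambda>_. 0) (\<lambda>_. 0) (\<lambda>x. f x * f x)) x
        - n2 (b1 f (\<lambda>_. 0) (\<lambda>_. 0) (\<lambda>x. f x * f x)) (b2 f (\<lambda>_. 0) (\<lambda>_. 0) (\<lambda>x. f x * f x)) (\<lambda>_. 0) (\<lambda>x. f x * f x) x) * (\<lambda>_. 0) x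
    = - 15/4 * (f x * f x * f x * f x * deriv f x * deriv f x) + deriv (\<lambda>x. 7/4 * (f x * f x * f x * f x * f x * deriv f x)) x"
  using assms by (simp add: n1_def n2_def b1_def b2_def algebra_simps)

lemma sin_deriv: "((\<lambda>x. c * sin (2*pi*x) + d * cos (2*pi*x)) has_real_derivative
   ((- d * (2*pi)) * sin (2*pi*x) + (c * (2*pi)) * cos (2*pi*x))) (at x)"
  by (auto intro!: derivative_eq_intros simp: algebra_simps)

lemma sin_sm1: "sm1 (\<lambda>x. sin (2*pi*x))"
proof (rule sm1_coinduct[where S="\<lambda>h. \<exists>c d. h = (\<lambda>x. c * sin (2*pi*x) + d * cos (2*pi*x))"])
  show "\<exists>c d. (\<lambda>x. sin (2*pi*x)) = (\<lambda>x. c * sin (2*pi*x) + d * cos (2*pi*x))"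
    by (rule exI[of _ 1], rule exI[of _ 0]) simp
  fix h assume "\<exists>c d. h = (\<lambda>x. c * sin (2*pi*x) + d * cos (2*pi*x))"
  then obtain c d where h: "h = (\<lambda>x. c * sin (2*pi*x) + d * cos (2*pi*x))" by blast
  have "deriv h = (\<lambda>x. (- d * (2*pi)) * sin (2*pi*x) + (c * (2*pi)) * cos (2*pi*x))"
    unfolding h using sin_deriv DERIV_imp_deriv by blast
  moreover have "h differentiable at x" for x
    unfolding h using sin_deriv real_differentiable_def by blast
  ultimately show "(\<forall>x. h differentiable at x) \<and> (\<exists>c d. deriv h = (\<lambda>x. c * sin (2*pi*x) + d * cos (2*pi*x)))"
    by blast
qed

lemma sin_deriv1: "deriv (\<lambda>x. sin (2*pi*x)) x = 2 * pi * cos (2*pi*x)"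
proof -
  have "((\<lambda>x. sin (2*pi*x)) has_real_derivative (2 * pi * cos (2*pi*x))) (at x)"
    by (auto intro!: derivative_eq_intros)
  then show ?thesis by (rule DERIV_imp_deriv)
qed

lemma sin_per1: "per1 (\<lambda>x. sin (2*pi*x))"
  unfolding per1_def by (simp add: distrib_left sin_add)

lemma part1:
  fixes a :: real
  assumes a: "a > 0" and f: "smooth f" and g: "smooth g" and pf: "\<forall>x. f (x + 1) = f x" and pg: "\<forall>x. g (x + 1) = g x"
  shows "sec_S a (\<lambda>(x, y). (f x, 0)) (\<lambda>(x, y). (g x, 0))
              = a * integral (cbox (0,0) (1,1))
                  (\<lambda>(x::real, y::real). (f x * deriv g x - g x * deriv f x)\<^sup>2)
            \<and> sec_S a (\<lambda>(x, y). (f x, 0)) (\<lambda>(x, y). (g x, 0)) \<ge> 0"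
proof -
  have sf: "sm1 f" and sg: "sm1 g" using f g smooth_sm1 by blast+
  have pf': "per1 f" and pg': "per1 g" using pf pg by (auto simp: per1_def)
  have a0: "a \<noteq> 0" using a by simp
  let ?T = "\<lambda>x. (f x * deriv g x - g x * deriv f x)\<^sup>2"
  let ?P = "\<lambda>x. f x * f x * g x * deriv g x - f x * deriv f x * g x * g x"
  have u: "(\<lambda>(x, y). (f x, 0::real)) = xf f (\<lambda>_. 0)" "(\<lambda>(x, y). (g x, 0::real)) = xf g (\<lambda>_. 0)"
    by (simp_all add: xf_def)
  have sT: "sm1 ?T"
  proof -
    have "?T = (\<lambda>x. (f x * deriv g x - g x * deriv f x) * (f x * deriv g x - g x * deriv f x))"
      by (simp add: power2_eq_square)
    then show ?thesis using sf sg by simp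
  qed
  have sP: "sm1 ?P" "per1 ?P" using sf sg pf' pg' by simp_all
  have S: "sec_S a (\<lambda>(x, y). (f x, 0)) (\<lambda>(x, y). (g x, 0)) = a * integral {0..1} ?T"
    unfolding u sec_S_xf[OF a0 sf sm1_const sg sm1_const pf' per1_const pg' per1_const]
    by (rule arg_cong[where f="\<lambda>t. a * t"], rule int_split[OF sT sP], rule part1_identity[OF sf sg])
  have R: "integral (cbox (0,0) (1,1)) (\<lambda>(x::real, y::real). ?T x) = integral {0..1} ?T"
    using sq_int[OF sm1_cont[OF sT]] by (simp add: case_prod_unfold)
  have "0 \<le> integral {0..1} ?T"
    by (rule integral_nonneg) (auto intro!: integrable_continuous_interval sm1_cont sT)
  then show ?thesis unfolding S R using a by simp
qed

lemma part2:
  fixes a :: real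
  assumes a: "a > 0"
  shows "sec_S a (\<lambda>(x, y). (sin (2 * pi * x), 0)) (\<lambda>(x, y). (0, (sin (2 * pi * x))\<^sup>2)) < 0"
proof -
  let ?s = "\<lambda>x. sin (2 * pi * x)"
  have a0: "a \<noteq> 0" using a by simp
  have ss: "sm1 ?s" and ps: "per1 ?s" by (rule sin_sm1, rule sin_per1)
  have ss2: "sm1 (\<lambda>x. ?s x * ?s x)" "per1 (\<lambda>x. ?s x * ?s x)" using ss ps by simp_all
  have u: "(\<lambda>(x, y). (sin (2 * pi * x), 0::real)) = xf ?s (\<lambda>_. 0)"
     "(\<lambda>(x, y). (0::real, (sin (2 * pi * x))\<^sup>2)) = xf (\<lambda>_. 0) (\<lambda>x. ?s x * ?s x)"
    by (simp_all add: xf_def power2_eq_square)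
  let ?K = "\<lambda>x. ?s x * ?s x * ?s x * ?s x * deriv ?s x * deriv ?s x"
  let ?T = "\<lambda>x. - 15/4 * ?K x"
  let ?P = "\<lambda>x. 7/4 * (?s x * ?s x * ?s x * ?s x * ?s x * deriv ?s x)"
  have sK: "sm1 ?K" using ss by simp
  have sT: "sm1 ?T" using ss by simp
  have sP: "sm1 ?P" "per1 ?P" using ss ps by simp_all
  have S: "sec_S a (\<lambda>(x, y). (sin (2 * pi * x), 0)) (\<lambda>(x, y). (0, (sin (2 * pi * x))\<^sup>2)) = a * integral {0..1} ?T"
    unfolding u sec_S_xf[OF a0 ss sm1_const sm1_const ss2(1) ps per1_const per1_const ss2(2)]
    by (rule arg_cong[where f="\<lambda>t. a * t"], rule int_split[OF sT sP], rule part2_identity[OF ss])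
  have iK: "?K integrable_on {0..1}" by (auto intro!: integrable_continuous_interval sm1_cont sK)
  have T: "integral {0..1} ?T = - 15/4 * integral {0..1} ?K"
    by (simp add: integral_mult_right)
  have K0: "?K x \<ge> 0" for x
  proof -
    have "?K x = (?s x * ?s x * deriv ?s x)\<^sup>2" by (simp add: power2_eq_square)
    then show ?thesis by simp
  qed
  have Kpos: "integral {0..1} ?K > 0"
  proof (rule ccontr)
    assume "\<not> integral {0..1} ?K > 0"
    moreover have "integral {0..1} ?K \<ge> 0" by (rule integral_nonneg[OF iK]) (use K0 in auto)
    ultimately have "integral {0..1} ?K = 0" by simp
    then have hi: "(?K has_integral 0) (cbox 0 1)" using integrable_integral[OF iK] by simp
    have "?K (1/8) = 0"
      by (rule has_integral_0_cbox_imp_0[OF _ _ hi]) (auto intro!: sm1_cont sK K0)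
    moreover have "?K (1/8) \<noteq> 0"
    proof -
      have e: "2 * pi * (1/8) = pi / 4" by simp
      have "?s (1/8) \<noteq> 0" unfolding e by (simp add: sin_45)
      moreover have "deriv ?s (1/8) \<noteq> 0" unfolding sin_deriv1 e by (simp add: cos_45)
      ultimately show ?thesis by simp
    qed
    ultimately show False by blast
  qed
  show ?thesis unfolding S T using a Kpos by (simp add: mult_pos_neg)
qed


theorem proposition7p2:
  fixes a :: real
  assumes "a > 0"
  shows "(\<forall>f g :: real \<Rightarrow> real.
            smooth f \<and> smooth g \<and> (\<forall>x. f (x + 1) = f x) \<and> (\<forall>x. g (x + 1) = g x) \<longrightarrow>
            sec_S a (\<lambda>(x, y). (f x, 0)) (\<lambda>(x, y). (g x, 0))
              = a * integral (cbox (0,0) (1,1))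
                  (\<lambda>(x::real, y::real). (f x * deriv g x - g x * deriv f x)\<^sup>2)
            \<and> sec_S a (\<lambda>(x, y). (f x, 0)) (\<lambda>(x, y). (g x, 0)) \<ge> 0)
       \<and> sec_S a (\<lambda>(x, y). (sin (2 * pi * x), 0)) (\<lambda>(x, y). (0, (sin (2 * pi * x))\<^sup>2)) < 0"
  using part1[OF assms] part2[OF assms] by blast

end
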